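(* Let $n\in\mathbb{N}_0$ and let $\mu$ be a positive Borel measure on $\mathbb{C}$ which is a sampling measure for the short-time Fourier transform with window $h_n$ and sampling bounds $A,B>0$, i.e. $$A\|f\|_2^2\le\int_{\mathbb{C}}|V_{h_n}f(z)|^2\,d\mu(z)\le B\|f\|_2^2\quad\text{for all } f\in L^2(\mathbb{R}).$$ If $R>0$ and $\mu(\mathbb{D}_R(z))=0$ for some $z\in\mathbb{C}$, then $$R^2\le\frac{2}{\pi}\log\left(4^n\cdot 5\,\frac{B}{A}\right).$$
   Context: For $z=x+i\xi\in\mathbb{C}$ and $g\in L^2(\mathbb{R})$, $\pi(z)g(t)=e^{2\pi i\xi t}g(t-x)$, and the short-time Fourier transform of $f\in L^2(\mathbb{R})$ with window $g$ is $V_gf(z)=\langle f,\pi(z)g\rangle$. The Hermite functions are $h_n(t)=c_n e^{\pi t^2}\frac{d^n}{dt^n}e^{-2\pi t^2}$, $n\in\mathbb{N}_0$, with $c_n>0$ chosen so that $\|h_n\|_2=1$. $\mathbb{D}_R(z)$ denotes the open Euclidean disk of radius $R$ centered at $z$. *)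

theory Defs
  imports "HOL-Analysis.Analysis"
begin

definition L2 :: "(real \<Rightarrow> complex) set" where
  "L2 = {f. f \<in> borel_measurable lborel \<and> integrable lborel (\<lambda>t. (cmod (f t))^2)}"

definition L2_norm_sq :: "(real \<Rightarrow> complex) \<Rightarrow> real" where
  "L2_norm_sq f = (\<integral>t. (cmod (f t))^2 \<partial>lborel)"

definition tf_shift :: "complex \<Rightarrow> (real \<Rightarrow> complex) \<Rightarrow> real \<Rightarrow> complex" where
  "tf_shift z g t = exp (2 * pi * \<i> * of_real (Im z * t)) * g (t - Re z)"

definition L2_inner :: "(real \<Rightarrow> complex) \<Rightarrow> (real \<Rightarrow> complex) \<Rightarrow> complex" where
  "L2_inner f g = (\<integral>t. f t * cnj (g t) \<partial>lborel)"

definition stft :: "(real \<Rightarrow> complex) \<Rightarrow> (real \<Rightarrow> complex) \<Rightarrow> complex \<Rightarrow> complex" where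
  "stft g f z = L2_inner f (tf_shift z g)"

definition hermite_raw :: "nat \<Rightarrow> real \<Rightarrow> real" where
  "hermite_raw n t = exp (pi * t^2) * (deriv ^^ n) (\<lambda>s. exp (- 2 * pi * s^2)) t"

definition hermite_fun :: "nat \<Rightarrow> real \<Rightarrow> complex" where
  "hermite_fun n t = of_real (hermite_raw n t / sqrt (\<integral>s. (hermite_raw n s)^2 \<partial>lborel))"

end

theory Submission
  imports Defs "HOL-Probability.Probability" "HOL-Computational_Algebra.Polynomial" "HOL-Real_Asymp.Real_Asymp"
begin

primrec HP :: "nat \<Rightarrow> real poly" where
  "HP 0 = 1"
| "HP (Suc k) = pderiv (HP k) + [:0, -4*pi:] * HP k"

lemma gam_deriv: "((\<lambda>s. exp (- 2 * pi * s^2)) has_real_derivative (- 4 * pi * s * exp (- 2 * pi * s^2))) (at s)"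
  by (auto intro!: derivative_eq_intros simp: algebra_simps)

lemma PG_deriv: "((\<lambda>s. poly P s * exp (- 2 * pi * s^2)) has_real_derivative
   poly (pderiv P + [:0, -4*pi:] * P) s * exp (- 2 * pi * s^2)) (at s)"
  by (auto intro!: derivative_eq_intros poly_DERIV simp: algebra_simps)

lemma iter_deriv: "(deriv ^^ k) (\<lambda>s. exp (- 2 * pi * s^2)) = (\<lambda>s. poly (HP k) s * exp (- 2 * pi * s^2))"
proof (induction k)
  case 0 then show ?case by simp
next
  case (Suc k)
  have "(deriv ^^ Suc k) (\<lambda>s. exp (- 2 * pi * s^2)) = deriv (\<lambda>s. poly (HP k) s * exp (- 2 * pi * s^2))"
    by (simp only: funpow.simps o_def Suc)
  also have "\<dots> = (\<lambda>s. poly (HP (Suc k)) s * exp (- 2 * pi * s^2))"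
    by (rule ext, simp only: HP.simps, rule DERIV_imp_deriv[OF PG_deriv])
  finally show ?case .
qed

lemma pow_le_fact_exp: assumes "0 \<le> (x::real)" shows "x^i \<le> fact i * exp x"
proof -
  have s: "summable (\<lambda>n. x^n / fact n)" using summable_exp[of x] by (simp add: divide_inverse mult.commute)
  have e: "exp x = (\<Sum>n. x^n / fact n)" by (simp add: exp_def divide_inverse mult.commute)
  have "sum (\<lambda>n. x^n / fact n) {i} \<le> (\<Sum>n. x^n / fact n)"
    by (rule sum_le_suminf[OF s]) (use assms in auto)
  then have "x^i / fact i \<le> exp x" by (simp add: e)
  then show ?thesis by (simp add: divide_le_eq mult.commute)
qed

lemma poly_exp_bound: "\<exists>C\<ge>0. \<forall>s::real. \<bar>poly P s\<bar> \<le> C * exp \<bar>s\<bar>"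
proof (intro exI[of _ "\<Sum>i\<le>degree P. \<bar>coeff P i\<bar> * fact i"] conjI allI)
  show "0 \<le> (\<Sum>i\<le>degree P. \<bar>coeff P i\<bar> * fact i)" by (intro sum_nonneg) auto
  fix s :: real
  have "\<bar>poly P s\<bar> = \<bar>\<Sum>i\<le>degree P. coeff P i * s ^ i\<bar>" by (simp add: poly_altdef)
  also have "\<dots> \<le> (\<Sum>i\<le>degree P. \<bar>coeff P i * s ^ i\<bar>)" by (rule sum_abs)
  also have "\<dots> \<le> (\<Sum>i\<le>degree P. \<bar>coeff P i\<bar> * fact i * exp \<bar>s\<bar>)"
  proof (intro sum_mono)
    fix i
    have "\<bar>s\<bar>^i \<le> fact i * exp \<bar>s\<bar>" by (rule pow_le_fact_exp) auto
    then show "\<bar>coeff P i * s ^ i\<bar> \<le> \<bar>coeff P i\<bar> * fact i * exp \<bar>s\<bar>"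
      by (simp add: abs_mult power_abs mult.assoc mult_left_mono)
  qed
  also have "\<dots> = (\<Sum>i\<le>degree P. \<bar>coeff P i\<bar> * fact i) * exp \<bar>s\<bar>" by (simp add: sum_distrib_right)
  finally show "\<bar>poly P s\<bar> \<le> (\<Sum>i\<le>degree P. \<bar>coeff P i\<bar> * fact i) * exp \<bar>s\<bar>" .
qed

lemma quad_ineq: "\<bar>s\<bar> + (- 2 * pi * s^2) + \<beta> * s \<le> (1+\<bar>\<beta>\<bar>)^2 + (-(s^2)/2)" for s \<beta> :: real
proof -
  have 1: "\<beta> * s \<le> \<bar>\<beta>\<bar> * \<bar>s\<bar>" by (metis abs_ge_self abs_mult)
  have 2: "0 \<le> ((1+\<bar>\<beta>\<bar>) - \<bar>s\<bar>/2)^2" by simp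
  have h2: "\<bar>s\<bar> + \<bar>\<beta>\<bar> * \<bar>s\<bar> \<le> (1+\<bar>\<beta>\<bar>)^2 + s^2/4"
  proof -
    have "((1+\<bar>\<beta>\<bar>) - \<bar>s\<bar>/2)^2 = (1+\<bar>\<beta>\<bar>)^2 + s^2/4 - (\<bar>s\<bar> + \<bar>\<beta>\<bar> * \<bar>s\<bar>)"
      by (simp add: power2_eq_square algebra_simps)
    then show ?thesis using 2 by linarith
  qed
  have 3: "3 * s^2 \<le> pi * s^2" using pi_gt3 by (intro mult_right_mono) auto
  have h5: "3 / 4 * s^2 \<le> 2 * (pi * s^2)" using 3 zero_le_power2[of s] by linarith
  have h6: "- 2 * pi * s^2 = - 2 * (pi * s^2)" by simp
  show ?thesis using 1 h2 h5 h6 by linarith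
qed

lemma gauss_bound: "\<exists>C. \<forall>s::real. \<bar>poly P s\<bar> * exp (- 2 * pi * s^2) * exp (\<beta> * s) \<le> C * exp (-(s^2)/2)"
proof -
  obtain C where C: "C \<ge> 0" "\<And>s. \<bar>poly P s\<bar> \<le> C * exp \<bar>s\<bar>" using poly_exp_bound by blast
  show ?thesis
  proof (intro exI[of _ "C * exp ((1+\<bar>\<beta>\<bar>)^2)"] allI)
    fix s :: real
    have "\<bar>poly P s\<bar> * exp (- 2 * pi * s^2) * exp (\<beta> * s) \<le> C * exp \<bar>s\<bar> * exp (- 2 * pi * s^2) * exp (\<beta> * s)"
      using C(2)[of s] by (intro mult_right_mono) auto
    also have "\<dots> = C * exp (\<bar>s\<bar> + (- 2 * pi * s^2) + \<beta> * s)" by (simp only: exp_add mult.assoc)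
    also have "\<dots> \<le> C * exp ((1+\<bar>\<beta>\<bar>)^2 + (-(s^2)/2))"
      using quad_ineq[of s \<beta>] C(1) by (intro mult_left_mono) auto
    also have "\<dots> = C * exp ((1+\<bar>\<beta>\<bar>)^2) * exp (-(s^2)/2)" by (simp only: exp_add mult.assoc)
    finally show "\<bar>poly P s\<bar> * exp (- 2 * pi * s^2) * exp (\<beta> * s) \<le> C * exp ((1+\<bar>\<beta>\<bar>)^2) * exp (-(s^2)/2)" .
  qed
qed

lemma integrable_gauss_half: "integrable lborel (\<lambda>s::real. exp (-(s^2)/2))"
proof -
  have "integrable lborel (\<lambda>s. sqrt (2*pi) * std_normal_density s)" by (intro integrable_mult_right) simp
  moreover have "(\<lambda>s. sqrt (2*pi) * std_normal_density s) = (\<lambda>s::real. exp (-(s^2)/2))"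
    by (simp add: std_normal_density_def)
  ultimately show ?thesis by simp
qed

definition FF :: "real poly \<Rightarrow> complex \<Rightarrow> real \<Rightarrow> complex" where
  "FF P c s = complex_of_real (poly P s * exp (- 2 * pi * s^2)) * exp (of_real s * (2 * of_real pi * c))"

lemma FF_norm: "norm (FF P c s) = \<bar>poly P s\<bar> * exp (- 2 * pi * s^2) * exp ((2*pi*Re c) * s)"
  by (simp add: FF_def norm_mult abs_mult mult_ac)

lemma FF_bound: "\<exists>C. \<forall>s. norm (FF P c s) \<le> C * exp (-(s^2)/2)"
  using gauss_bound[of P "2*pi*Re c"] by (simp add: FF_norm)

lemma FF_cont: "continuous_on UNIV (FF P c)"
  unfolding FF_def by (intro continuous_intros)

lemma FF_meas: "FF P c \<in> borel_measurable lborel"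
  using FF_cont by (simp add: borel_measurable_continuous_onI)

lemma FF_integrable: "integrable lborel (FF P c)"
proof -
  obtain C where C: "\<And>s. norm (FF P c s) \<le> C * exp (-(s^2)/2)" using FF_bound by blast
  show ?thesis
  proof (rule Bochner_Integration.integrable_bound[OF _ FF_meas])
    show "integrable lborel (\<lambda>s. C * exp (-(s^2)/2))" by (intro integrable_mult_right integrable_gauss_half)
    show "AE x in lborel. norm (FF P c x) \<le> norm (C * exp (-(x^2)/2))"
      using C by (intro AE_I2) (auto intro: order_trans abs_ge_self)
  qed
qed

lemma FF_lim: "(FF P c \<longlongrightarrow> 0) at_top" "(FF P c \<longlongrightarrow> 0) at_bot"
proof -
  obtain C where C: "\<And>s. norm (FF P c s) \<le> C * exp (-(s^2)/2)" using FF_bound by blast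
  have "((\<lambda>s::real. C * exp (-(s^2)/2)) \<longlongrightarrow> 0) at_top" by real_asymp
  then show "(FF P c \<longlongrightarrow> 0) at_top" by (rule Lim_null_comparison[rotated]) (use C in auto)
  have "((\<lambda>s::real. C * exp (-(s^2)/2)) \<longlongrightarrow> 0) at_bot" by real_asymp
  then show "(FF P c \<longlongrightarrow> 0) at_bot" by (rule Lim_null_comparison[rotated]) (use C in auto)
qed

lemma FF_deriv: "(FF P c has_vector_derivative
   (FF (pderiv P + [:0, -4*pi:] * P) c s + (2 * of_real pi * c) * FF P c s)) (at s)"
proof -
  have e: "((\<lambda>x. exp (of_real x * (2 * of_real pi * c))) has_vector_derivative (2 * of_real pi * c) * exp (of_real s * (2 * of_real pi * c))) (at s)"
    by (rule has_vector_derivative_real_field) (auto intro!: derivative_eq_intros)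
  show ?thesis unfolding FF_def
    by (rule has_vector_derivative_eq_rhs[OF has_vector_derivative_mult[OF has_vector_derivative_of_real[OF PG_deriv] e]])
       (simp add: FF_def algebra_simps)
qed

lemma FF_ibp: "integral\<^sup>L lborel (FF (pderiv P + [:0, -4*pi:] * P) c) = - (2 * of_real pi * c) * integral\<^sup>L lborel (FF P c)"
proof -
  let ?P' = "pderiv P + [:0, -4*pi:] * P"
  let ?f = "\<lambda>s. FF ?P' c s + (2 * of_real pi * c) * FF P c s"
  have int: "integrable lborel ?f" by (intro Bochner_Integration.integrable_add integrable_mult_right FF_integrable)
  have cont: "isCont ?f x" for x
    using FF_cont[of ?P' c] FF_cont[of P c] by (intro continuous_intros) (auto simp: continuous_on_eq_continuous_at)
  have "(LBINT x=-\<infinity>..\<infinity>. ?f x) = 0 - 0"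
  proof (rule interval_integral_FTC_integrable[where F="FF P c"])
    show "- \<infinity> < (\<infinity>::ereal)" by simp
    show "(FF P c has_vector_derivative ?f x) (at x)" for x by (rule FF_deriv)
    show "isCont ?f x" for x by (rule cont)
    show "set_integrable lborel (einterval (- \<infinity>) \<infinity>) ?f" using int by (simp add: set_integrable_def)
    show "((FF P c \<circ> real_of_ereal) \<longlongrightarrow> 0) (at_right (- \<infinity>))"
      using FF_lim by (simp add: ereal_tendsto_simps1)
    show "((FF P c \<circ> real_of_ereal) \<longlongrightarrow> 0) (at_left \<infinity>)"
      using FF_lim by (simp add: ereal_tendsto_simps1)
  qed
  then have "integral\<^sup>L lborel ?f = 0"
    by (simp add: interval_lebesgue_integral_def set_lebesgue_integral_def)
  then have "integral\<^sup>L lborel (FF ?P' c) + (2 * of_real pi * c) * integral\<^sup>L lborel (FF P c) = 0"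
    by (simp add: FF_integrable)
  then show ?thesis by (simp add: eq_neg_iff_add_eq_0)
qed

lemma FF_HP: "integral\<^sup>L lborel (FF (HP k) c) = (- (2 * of_real pi * c))^k * integral\<^sup>L lborel (FF 1 c)"
proof (induction k)
  case 0 then show ?case by simp
next
  case (Suc k)
  show ?case by (simp only: HP.simps FF_ibp Suc power_Suc mult.assoc)
qed

lemma gauss_ft: "(\<integral>u. complex_of_real (exp (- 2 * pi * u^2)) * exp (\<i> * of_real (- 2 * pi * b * u)) \<partial>lborel)
   = complex_of_real (exp (- pi * b^2 / 2) / sqrt 2)" (is "?I = _")
proof -
  define k where "k = 2 * sqrt pi"
  define t where "t = - sqrt pi * b"
  have kpos: "k > 0" by (simp add: k_def)
  have "char std_normal_distribution t = complex_of_real (exp (- (t^2) / 2))"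
    by (simp add: char_std_normal_distribution)
  moreover have "char std_normal_distribution t = (\<integral>x. std_normal_density x *\<^sub>R iexp (t * x) \<partial>lborel)"
    unfolding char_def by (subst integral_density) auto
  moreover have "(\<integral>x. std_normal_density x *\<^sub>R iexp (t * x) \<partial>lborel)
      = k *\<^sub>R (\<integral>u. std_normal_density (0 + k * u) *\<^sub>R iexp (t * (0 + k * u)) \<partial>lborel)"
    using lborel_integral_real_affine[of k "\<lambda>x. std_normal_density x *\<^sub>R iexp (t * x)" 0] kpos by simp
  moreover have "(\<lambda>u. std_normal_density (0 + k * u) *\<^sub>R iexp (t * (0 + k * u)))
     = (\<lambda>u. complex_of_real (1 / sqrt (2*pi)) * (complex_of_real (exp (- 2 * pi * u^2)) * exp (\<i> * of_real (- 2 * pi * b * u))))"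
  proof
    fix u
    have "(k * u)^2 / 2 = 2 * pi * u^2" by (simp add: k_def power_mult_distrib)
    moreover have "t * (k * u) = - 2 * pi * b * u" by (simp add: k_def t_def)
    ultimately show "std_normal_density (0 + k * u) *\<^sub>R iexp (t * (0 + k * u)) =
      complex_of_real (1 / sqrt (2*pi)) * (complex_of_real (exp (- 2 * pi * u^2)) * exp (\<i> * of_real (- 2 * pi * b * u)))"
      by (simp add: std_normal_density_def scaleR_conv_of_real)
  qed
  moreover have "t^2 / 2 = pi * b^2 / 2" by (simp add: t_def power_mult_distrib)
  ultimately have E0: "complex_of_real (exp (- pi * b^2 / 2)) = of_real k * ?I / of_real (sqrt (2*pi))"
    by (simp add: scaleR_conv_of_real)
  also have "\<dots> = of_real (k / sqrt (2*pi)) * ?I" by simp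
  also have "k / sqrt (2*pi) = sqrt 2" by (simp add: k_def real_sqrt_mult field_simps)
  finally have E: "complex_of_real (exp (- pi * b^2 / 2)) = complex_of_real (sqrt 2) * ?I" .
  show ?thesis using E by (simp add: field_simps)
qed


lemma FF1_shift: "FF 1 c (Re c / 2 + 1 * u) =
  exp (complex_of_real (pi * (Re c)^2 / 2) + \<i> * of_real (pi * Re c * Im c)) *
  (complex_of_real (exp (- 2 * pi * u^2)) * exp (\<i> * of_real (- 2 * pi * (- Im c) * u)))"
proof -
  have "FF 1 c (Re c / 2 + 1 * u) = exp (complex_of_real (- 2 * pi * (Re c / 2 + u)^2) + of_real (Re c / 2 + u) * (2 * of_real pi * c))"
    by (simp only: FF_def poly_1 mult_1_left exp_add exp_of_real)
  also have "\<dots> = exp ((complex_of_real (pi * (Re c)^2 / 2) + \<i> * of_real (pi * Re c * Im c)) +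
     (complex_of_real (- 2 * pi * u^2) + \<i> * of_real (- 2 * pi * (- Im c) * u)))"
    by (rule arg_cong[where f=exp]) (simp add: complex_eq_iff power2_eq_square algebra_simps)
  also have "\<dots> = exp (complex_of_real (pi * (Re c)^2 / 2) + \<i> * of_real (pi * Re c * Im c)) *
  (complex_of_real (exp (- 2 * pi * u^2)) * exp (\<i> * of_real (- 2 * pi * (- Im c) * u)))"
    by (simp only: exp_add exp_of_real)
  finally show ?thesis .
qed

lemma J_norm: "cmod (integral\<^sup>L lborel (FF 1 c)) = exp (pi * (Re c)^2 / 2) * exp (- pi * (Im c)^2 / 2) / sqrt 2"
proof -
  have "integral\<^sup>L lborel (FF 1 c) = \<bar>1\<bar> *\<^sub>R (\<integral>u. FF 1 c (Re c / 2 + 1 * u) \<partial>lborel)"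
    by (rule lborel_integral_real_affine) simp
  also have "\<dots> = exp (complex_of_real (pi * (Re c)^2 / 2) + \<i> * of_real (pi * Re c * Im c)) *
     (\<integral>u. complex_of_real (exp (- 2 * pi * u^2)) * exp (\<i> * of_real (- 2 * pi * (- Im c) * u)) \<partial>lborel)"
    by (simp only: FF1_shift integral_mult_right_zero) simp
  also have "\<dots> = exp (complex_of_real (pi * (Re c)^2 / 2) + \<i> * of_real (pi * Re c * Im c)) *
      complex_of_real (exp (- pi * (- Im c)^2 / 2) / sqrt 2)"
    by (simp only: gauss_ft)
  finally show ?thesis by (simp add: norm_mult norm_divide norm_exp_eq_Re)
qed

definition Sn :: "nat \<Rightarrow> real" where "Sn n = (\<integral>s. (hermite_raw n s)^2 \<partial>lborel)"

lemma hermite_raw_eq: "hermite_raw n t = exp (pi * t^2) * (poly (HP n) t * exp (- 2 * pi * t^2))"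
  unfolding hermite_raw_def iter_deriv by simp

lemma hermite_fun_Sn: "hermite_fun n t = complex_of_real (hermite_raw n t / sqrt (Sn n))"
  unfolding hermite_fun_def Sn_def by simp

lemma ptwise:
  fixes w \<zeta> :: complex and s :: real
  defines "x \<equiv> Re \<zeta>"
  shows "tf_shift w (\<lambda>t. complex_of_real (exp (- pi * t^2))) (x + 1 * s) * cnj (tf_shift \<zeta> (hermite_fun n) (x + 1 * s))
   = (exp (\<i> * of_real (2 * pi * (Im w - Im \<zeta>) * x)) * of_real (exp (- pi * (Re w - x)^2) / sqrt (Sn n))) * FF (HP n) (w - \<zeta>) s"
proof -
  let ?p = "poly (HP n) s" and ?\<sigma> = "sqrt (Sn n)"
  let ?A1 = "2 * of_real pi * \<i> * complex_of_real (Im w * (x + 1 * s))"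
  let ?A2 = "complex_of_real (- pi * (x + 1 * s - Re w)^2)"
  let ?A3 = "cnj (2 * of_real pi * \<i> * complex_of_real (Im \<zeta> * (x + 1 * s)))"
  let ?A4 = "complex_of_real (pi * s^2)"
  let ?A5 = "complex_of_real (- 2 * pi * s^2)"
  let ?B1 = "\<i> * of_real (2 * pi * (Im w - Im \<zeta>) * x)"
  let ?B2 = "complex_of_real (- pi * (Re w - x)^2)"
  let ?B3 = "complex_of_real (- 2 * pi * s^2)"
  let ?B4 = "of_real s * (2 * of_real pi * (w - \<zeta>))"
  have L: "tf_shift w (\<lambda>t. complex_of_real (exp (- pi * t^2))) (x + 1 * s) * cnj (tf_shift \<zeta> (hermite_fun n) (x + 1 * s))
      = of_real (?p / ?\<sigma>) * exp (?A1 + ?A2 + ?A3 + ?A4 + ?A5)"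
    unfolding exp_add exp_of_real
    by (simp add: tf_shift_def hermite_fun_Sn hermite_raw_eq exp_cnj x_def ac_simps)
  have R: "(exp (\<i> * of_real (2 * pi * (Im w - Im \<zeta>) * x)) * of_real (exp (- pi * (Re w - x)^2) / sqrt (Sn n))) * FF (HP n) (w - \<zeta>) s
      = of_real (?p / ?\<sigma>) * exp (?B1 + ?B2 + ?B3 + ?B4)"
    unfolding exp_add exp_of_real
    by (simp add: FF_def ac_simps)
  have E: "?A1 + ?A2 + ?A3 + ?A4 + ?A5 = ?B1 + ?B2 + ?B3 + ?B4"
    by (simp add: complex_eq_iff power2_eq_square algebra_simps x_def)
  show ?thesis by (simp only: L R E)
qed


lemma Sn_nonneg: "0 \<le> Sn n"
  unfolding Sn_def by (intro integral_nonneg_AE) auto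

lemma stft_norm:
  fixes w \<zeta> :: complex
  shows "cmod (stft (hermite_fun n) (tf_shift w (\<lambda>t. complex_of_real (exp (- pi * t^2)))) \<zeta>)
   = exp (- pi * (Re w - Re \<zeta>)^2) / sqrt (Sn n) * ((2*pi)^n * cmod (w - \<zeta>)^n) *
     (exp (pi * (Re (w - \<zeta>))^2 / 2) * exp (- pi * (Im (w - \<zeta>))^2 / 2) / sqrt 2)"
proof -
  let ?f = "tf_shift w (\<lambda>t. complex_of_real (exp (- pi * t^2)))"
  let ?K = "exp (\<i> * of_real (2 * pi * (Im w - Im \<zeta>) * Re \<zeta>)) * of_real (exp (- pi * (Re w - Re \<zeta>)^2) / sqrt (Sn n))"
  have "stft (hermite_fun n) ?f \<zeta> = (\<integral>t. ?f t * cnj (tf_shift \<zeta> (hermite_fun n) t) \<partial>lborel)"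
    by (simp add: stft_def L2_inner_def)
  also have "\<dots> = \<bar>1\<bar> *\<^sub>R (\<integral>s. ?f (Re \<zeta> + 1 * s) * cnj (tf_shift \<zeta> (hermite_fun n) (Re \<zeta> + 1 * s)) \<partial>lborel)"
    by (rule lborel_integral_real_affine) simp
  also have "\<dots> = (\<integral>s. ?K * FF (HP n) (w - \<zeta>) s \<partial>lborel)"
    by (simp only: ptwise) simp
  also have "\<dots> = ?K * ((- (2 * of_real pi * (w - \<zeta>)))^n * integral\<^sup>L lborel (FF 1 (w - \<zeta>)))"
    by (simp only: integral_mult_right_zero FF_HP)
  finally have eq: "stft (hermite_fun n) ?f \<zeta> = ?K * ((- (2 * of_real pi * (w - \<zeta>)))^n * integral\<^sup>L lborel (FF 1 (w - \<zeta>)))" .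
  have h1: "cmod (exp (\<i> * complex_of_real r)) = 1" for r by (rule norm_exp_i_times)
  have nK: "cmod ?K = exp (- pi * (Re w - Re \<zeta>)^2) / sqrt (Sn n)"
    by (simp only: norm_mult h1 norm_of_real) (simp add: Sn_nonneg)
  have nP: "cmod ((- (2 * of_real pi * (w - \<zeta>)))^n) = (2*pi)^n * cmod (w - \<zeta>)^n"
    by (simp add: norm_power norm_mult power_mult_distrib)
  have "cmod (stft (hermite_fun n) ?f \<zeta>) = cmod ?K * (cmod ((- (2 * of_real pi * (w - \<zeta>)))^n) * cmod (integral\<^sup>L lborel (FF 1 (w - \<zeta>))))"
    unfolding eq by (simp only: norm_mult)
  then show ?thesis by (simp only: nK nP J_norm)
qed

lemma stft_sq:
  fixes w \<zeta> :: complex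
  shows "(cmod (stft (hermite_fun n) (tf_shift w (\<lambda>t. complex_of_real (exp (- pi * t^2)))) \<zeta>))^2
   = (2*pi)^(2*n) / (2 * Sn n) * (cmod (\<zeta> - w)^2)^n * exp (- pi * cmod (\<zeta> - w)^2)"
proof -
  let ?a = "Re (w - \<zeta>)" and ?b = "Im (w - \<zeta>)"
  have c2: "cmod (\<zeta> - w)^2 = ?a^2 + ?b^2"
    unfolding cmod_power2 by (simp add: power2_commute)
  have c3: "cmod (w - \<zeta>) = cmod (\<zeta> - w)" by (rule norm_minus_commute)
  have ex: "exp (- pi * (Re w - Re \<zeta>)^2) * exp (pi * ?a^2 / 2) * exp (- pi * ?b^2 / 2)
        = exp (- pi * (?a^2 + ?b^2) / 2)"
    by (simp add: exp_add[symmetric] algebra_simps power2_eq_square) (simp add: field_simps)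
  have "(cmod (stft (hermite_fun n) (tf_shift w (\<lambda>t. complex_of_real (exp (- pi * t^2)))) \<zeta>))^2
     = (exp (- pi * (Re w - Re \<zeta>)^2) * exp (pi * ?a^2 / 2) * exp (- pi * ?b^2 / 2))^2 * ((2*pi)^n * cmod (w - \<zeta>)^n)^2
        / (sqrt (Sn n)^2 * sqrt 2 ^ 2)"
    unfolding stft_norm by (simp add: power_mult_distrib power_divide field_simps)
  also have "\<dots> = exp (- pi * (?a^2 + ?b^2) / 2)^2 * ((2*pi)^(2*n) * (cmod (\<zeta> - w)^2)^n) / (Sn n * 2)"
    unfolding ex c3 using Sn_nonneg[of n]
    by (simp add: power_mult_distrib power_mult[symmetric] mult.commute[of 2 n])
  also have "exp (- pi * (?a^2 + ?b^2) / 2)^2 = exp (- pi * cmod (\<zeta> - w)^2)"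
    unfolding c2 by (simp add: exp_double[symmetric] power2_eq_square[of "exp _"])
  finally show ?thesis by (simp add: mult_ac)
qed

lemma gauss_shift_eq: "exp (- 2 * pi * (t - m)^2) = sqrt (1/2) * normal_density m (1 / (2 * sqrt pi)) t"
proof -
  have "normal_density m (1 / (2 * sqrt pi)) t = 1 / sqrt (1/2) * exp (- 2 * pi * (t - m)^2)"
    by (simp add: normal_density_def power_divide power_mult_distrib field_simps)
  then show ?thesis by (simp add: real_sqrt_divide)
qed

lemma fw_norm: "cmod (tf_shift w (\<lambda>t. complex_of_real (exp (- pi * t^2))) t) = exp (- pi * (t - Re w)^2)"
  by (simp add: tf_shift_def norm_mult)

lemma fw_L2: "tf_shift w (\<lambda>t. complex_of_real (exp (- pi * t^2))) \<in> L2"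
  and fw_L2norm: "L2_norm_sq (tf_shift w (\<lambda>t. complex_of_real (exp (- pi * t^2)))) = sqrt (1/2)"
proof -
  have sq: "(cmod (tf_shift w (\<lambda>t. complex_of_real (exp (- pi * t^2))) t))^2 = sqrt (1/2) * normal_density (Re w) (1 / (2 * sqrt pi)) t" for t
    unfolding fw_norm gauss_shift_eq[symmetric]
    by (simp add: exp_double[symmetric] power2_eq_square[of "exp _"] algebra_simps)
  have meas: "tf_shift w (\<lambda>t. complex_of_real (exp (- pi * t^2))) \<in> borel_measurable lborel"
  proof -
    have "continuous_on UNIV (tf_shift w (\<lambda>t. complex_of_real (exp (- pi * t^2))))"
      unfolding tf_shift_def by (intro continuous_intros)
    then show ?thesis by (simp add: borel_measurable_continuous_onI)
  qed
  show "tf_shift w (\<lambda>t. complex_of_real (exp (- pi * t^2))) \<in> L2"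
    unfolding L2_def mem_Collect_eq sq using meas by simp
  show "L2_norm_sq (tf_shift w (\<lambda>t. complex_of_real (exp (- pi * t^2)))) = sqrt (1/2)"
    unfolding L2_norm_sq_def sq by simp
qed

lemma sqrt_bound: assumes "0 \<le> X" "9/16 * S \<le> X^2" "0 \<le> S" shows "3/4 * sqrt S \<le> X"
proof -
  have "3/4 * sqrt S = sqrt (9/16 * S)" by (simp add: real_sqrt_mult real_sqrt_divide)
  also have "\<dots> \<le> sqrt (X^2)" using assms by (intro real_sqrt_le_mono) auto
  also have "\<dots> = X" using assms by simp
  finally show ?thesis .
qed

lemma cover_upper:
  fixes p q :: real assumes q: "0 \<le> q"
  shows "3/4 * sqrt (p^2 + q^2) \<le> p \<or> 3/4 * sqrt (p^2 + q^2) \<le> (7*p + 24*q)/25 \<or> 3/4 * sqrt (p^2 + q^2) \<le> (-4*p + 3*q)/5"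
proof -
  consider "4*q \<le> 3*p" | "3*p < 4*q" "-q \<le> 3*p" | "3*p < -q" by linarith
  then show ?thesis
  proof cases
    case 1
    have "(4*q)^2 \<le> (3*p)^2" using 1 q by (intro power_mono) auto
    then have "16 * q^2 \<le> 9 * p^2" by (simp add: power_mult_distrib)
    then have "9 * q^2 \<le> 7 * p^2" using zero_le_power2[of p] by linarith
    then have "9/16 * (p^2 + q^2) \<le> p^2" by (simp add: ring_distribs)
    then have "3/4 * sqrt (p^2 + q^2) \<le> p" using 1 q by (intro sqrt_bound) auto
    then show ?thesis by simp
  next
    case 2
    have h1: "0 \<le> (4*q - 3*p) * (3*p + q)" using 2 by (intro mult_nonneg_nonneg) auto
    have h2: "0 \<le> (1459*p - 462*q)^2" by simp
    have h3: "0 \<le> q^2" by simp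
    have e1: "(4*q - 3*p) * (3*p + q) = 9*(p*q) + 4*(q*q) - 9*(p*p)" by (simp add: algebra_simps)
    have e2: "(1459*p - 462*q)^2 = 2128681*(p*p) - 1348116*(p*q) + 213444*(q*q)"
      by (simp add: power2_eq_square algebra_simps)
    have e3: "((7*p + 24*q)/25)^2 = 49/625*(p*p) + 336/625*(p*q) + 576/625*(q*q)"
      by (simp add: power2_eq_square algebra_simps add_divide_distrib)
    have e4: "9/16 * (p^2 + q^2) = 9/16*(p*p) + 9/16*(q*q)" by (simp add: power2_eq_square algebra_simps)
    have h4: "0 \<le> q*q" by simp
    have "9/16 * (p^2 + q^2) \<le> ((7*p + 24*q)/25)^2"
      unfolding e3 e4 using h1 h2 h4 unfolding e1 e2 by linarith
    then have "3/4 * sqrt (p^2 + q^2) \<le> (7*p + 24*q)/25" using 2 q by (intro sqrt_bound) auto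
    then show ?thesis by simp
  next
    case 3
    have h1: "q * q \<le> (-3*p) * q" using 3 q by (intro mult_right_mono) auto
    have h2: "0 \<le> (-p) * q" using 3 q by (intro mult_nonneg_nonneg) auto
    have e3: "((-4*p + 3*q)/5)^2 = 16/25*(p*p) - 24/25*(p*q) + 9/25*(q*q)"
      by (simp add: power2_eq_square algebra_simps add_divide_distrib diff_divide_distrib)
    have e4: "9/16 * (p^2 + q^2) = 9/16*(p*p) + 9/16*(q*q)" by (simp add: power2_eq_square algebra_simps)
    have h3: "0 \<le> p*p" by simp
    have h1': "q * q \<le> -3 * (p * q)" using h1 by (simp add: algebra_simps)
    have h2': "0 \<le> - (p * q)" using h2 by simp
    have "9/16 * (p^2 + q^2) \<le> ((-4*p + 3*q)/5)^2"
      unfolding e3 e4 using h1' h2' h3 by linarith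
    then have "3/4 * sqrt (p^2 + q^2) \<le> (-4*p + 3*q)/5" using 3 q by (intro sqrt_bound) auto
    then show ?thesis by simp
  qed
qed

definition evs :: "complex list" where
  "evs = [1, Complex (7/25) (24/25), Complex (7/25) (-24/25), Complex (-4/5) (3/5), Complex (-4/5) (-3/5)]"

lemma evs_norm: "e \<in> set evs \<Longrightarrow> cmod e = 1"
  by (auto simp: evs_def cmod_def power2_eq_square)

lemma cover: "\<exists>e\<in>set evs. 3/4 * cmod u \<le> Re u * Re e + Im u * Im e"
proof (cases "0 \<le> Im u")
  case True
  then show ?thesis using cover_upper[OF True, of "Re u"]
    by (auto simp: evs_def cmod_def algebra_simps)
next
  case False
  then have "0 \<le> - Im u" by simp
  then show ?thesis using cover_upper[of "- Im u" "Re u"]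
    by (auto simp: evs_def cmod_def algebra_simps)
qed

lemma ptw_ineq:
  fixes u e :: complex and R :: real
  assumes R: "R > 0" and u: "R \<le> cmod u" and e: "cmod e = 1"
    and good: "3/4 * cmod u \<le> Re u * Re e + Im u * Im e"
  shows "(cmod u ^2)^n * exp (- pi * cmod u ^2) \<le>
    4^n * exp (- pi * R^2 / 2) * ((cmod (u - of_real (R/2) * e) ^2)^n * exp (- pi * cmod (u - of_real (R/2) * e) ^2))"
proof -
  define d where "d = complex_of_real (R/2) * e"
  have e2: "Re e ^2 + Im e ^2 = 1" using e by (simp add: cmod_def)
  have cd: "cmod d = R/2" using R e by (simp add: d_def norm_mult)
  have D: "cmod (u - d) ^2 = cmod u ^2 - R * (Re u * Re e + Im u * Im e) + R^2/4 * (Re e ^2 + Im e ^2)"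
    unfolding cmod_power2 by (simp add: d_def power2_eq_square algebra_simps)
  have g1: "R * (3/4 * cmod u) \<le> R * (Re u * Re e + Im u * Im e)" using good R by (intro mult_left_mono) auto
  have g2: "R * R \<le> R * cmod u" using u R by (intro mult_left_mono) auto
  define X where "X = Re u * Re e + Im u * Im e"
  have D': "cmod (u - d) ^2 = cmod u ^2 - R * X + R^2/4" using D e2 by (simp add: X_def)
  have g1': "3/4 * (R * cmod u) \<le> R * X" using g1 by (simp add: X_def mult_ac)
  have g3: "R^2 = R * R" by (simp add: power2_eq_square)
  have A: "cmod (u - d) ^2 \<le> cmod u ^2 - R^2/2"
    using D' g1' g2 g3 by linarith
  have t: "cmod u - cmod d \<le> cmod (u - d)" by (rule norm_triangle_ineq2)
  have B0: "cmod u / 2 \<le> cmod (u - d)" using t cd u by linarith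
  have B1: "(cmod u / 2)^2 \<le> cmod (u - d) ^2" using B0 by (intro power_mono) auto
  have B: "cmod u ^2 \<le> 4 * cmod (u - d) ^2" using B1 by (simp add: power_divide)
  have P: "(cmod u ^2)^n \<le> 4^n * (cmod (u - d) ^2)^n"
  proof -
    have "(cmod u ^2)^n \<le> (4 * cmod (u - d) ^2)^n" by (rule power_mono[OF B]) simp
    then show ?thesis by (simp only: power_mult_distrib)
  qed
  have E: "exp (- pi * cmod u ^2) \<le> exp (- pi * R^2 / 2) * exp (- pi * cmod (u - d) ^2)"
  proof -
    have "pi * cmod (u - d) ^2 \<le> pi * (cmod u ^2 - R^2/2)" using A by (intro mult_left_mono) auto
    then have "- pi * cmod u ^2 \<le> - pi * R^2 / 2 + - pi * cmod (u - d) ^2" by (simp add: algebra_simps)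
    then show ?thesis by (simp add: exp_add[symmetric])
  qed
  have "(cmod u ^2)^n * exp (- pi * cmod u ^2) \<le> (4^n * (cmod (u - d) ^2)^n) * (exp (- pi * R^2 / 2) * exp (- pi * cmod (u - d) ^2))"
    using P E by (intro mult_mono) auto
  then show ?thesis by (simp add: d_def mult_ac)
qed

theorem theorem2:
  fixes \<mu> :: "complex measure" and n :: nat and A B R :: real and z :: complex
  assumes borel: "sets \<mu> = sets borel"
    and A_pos: "A > 0" and B_pos: "B > 0"
    and sampling: "\<And>f. f \<in> L2 \<Longrightarrow>
        ennreal (A * L2_norm_sq f) \<le> (\<integral>\<^sup>+ w. ennreal ((cmod (stft (hermite_fun n) f w))^2) \<partial>\<mu>)
      \<and> (\<integral>\<^sup>+ w. ennreal ((cmod (stft (hermite_fun n) f w))^2) \<partial>\<mu>) \<le> ennreal (B * L2_norm_sq f)"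
    and R_pos: "R > 0"
    and hole: "emeasure \<mu> (ball z R) = 0"
  shows "R^2 \<le> 2 / pi * ln (4^n * 5 * (B / A))"
proof -
  define \<phi> where "\<phi> = (\<lambda>t. complex_of_real (exp (- pi * t^2)))"
  define \<kappa> where "\<kappa> = (2*pi)^(2*n) / (2 * Sn n)"
  define \<rho> where "\<rho> = (\<lambda>v::complex. (cmod v ^2)^n * exp (- pi * cmod v ^2))"
  define V where "V = (\<lambda>w \<zeta>. ennreal (\<kappa> * \<rho> (\<zeta> - w)))"
  define N :: real where "N = sqrt (1/2)"
  define W where "W = (\<lambda>i. z + complex_of_real (R/2) * evs ! i)"
  define c where "c = 4^n * exp (- pi * R^2 / 2)"
  have Npos: "N > 0" by (simp add: N_def)
  have c_nn: "0 \<le> c" by (simp add: c_def)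
  have kappa_nn: "\<kappa> \<ge> 0" using Sn_nonneg[of n] by (simp add: \<kappa>_def)
  have rho_nn: "\<rho> v \<ge> 0" for v by (simp add: \<rho>_def)
  have meas: "V w \<in> borel_measurable \<mu>" for w
  proof -
    have "V w \<in> borel_measurable borel" unfolding V_def \<rho>_def by measurable
    moreover have "measurable \<mu> (borel :: ennreal measure) = measurable borel borel"
      by (rule measurable_cong_sets[OF borel refl])
    ultimately show ?thesis by simp
  qed
  have samp: "ennreal (A * N) \<le> integral\<^sup>N \<mu> (V w) \<and> integral\<^sup>N \<mu> (V w) \<le> ennreal (B * N)" for w
  proof -
    have "(\<lambda>\<zeta>. ennreal ((cmod (stft (hermite_fun n) (tf_shift w \<phi>) \<zeta>))^2)) = V w"
      by (rule ext) (simp only: \<phi>_def V_def stft_sq \<kappa>_def \<rho>_def mult.assoc)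
    then show ?thesis using sampling[OF fw_L2[of w]] fw_L2norm[of w] by (simp add: \<phi>_def N_def)
  qed
  have null: "ball z R \<in> null_sets \<mu>" using hole borel by (auto simp: null_sets_def)
  have AE: "AE \<zeta> in \<mu>. \<zeta> \<notin> ball z R" by (rule AE_not_in[OF null])
  have pt: "V z \<zeta> \<le> ennreal c * (\<Sum>i<5. V (W i) \<zeta>)" if "\<zeta> \<notin> ball z R" for \<zeta>
  proof -
    let ?u = "\<zeta> - z"
    have uR: "R \<le> cmod ?u" using that by (simp add: dist_norm norm_minus_commute)
    obtain e where e: "e \<in> set evs" "3/4 * cmod ?u \<le> Re ?u * Re e + Im ?u * Im e" using cover by blast
    obtain i where i: "i < length evs" "e = evs ! i" using e(1) by (auto simp: in_set_conv_nth)
    have i5: "i < 5" using i(1) by (simp add: evs_def)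
    have zW: "\<zeta> - W i = ?u - complex_of_real (R/2) * e" by (simp add: W_def i(2))
    have "\<rho> ?u \<le> c * \<rho> (\<zeta> - W i)"
      unfolding \<rho>_def c_def zW using ptw_ineq[OF R_pos uR evs_norm[OF e(1)] e(2)] by simp
    then have "\<kappa> * \<rho> ?u \<le> c * (\<kappa> * \<rho> (\<zeta> - W i))"
      using kappa_nn by (simp add: mult_left_mono mult.left_commute)
    then have "V z \<zeta> \<le> ennreal (c * (\<kappa> * \<rho> (\<zeta> - W i)))" by (simp add: V_def ennreal_leI)
    also have "\<dots> = ennreal c * V (W i) \<zeta>"
      using kappa_nn rho_nn by (simp add: V_def c_def ennreal_mult)
    also have "\<dots> \<le> ennreal c * (\<Sum>i<5. V (W i) \<zeta>)"
      using i5 by (intro mult_left_mono member_le_sum) auto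
    finally show ?thesis .
  qed
  have "ennreal (A * N) \<le> integral\<^sup>N \<mu> (V z)" using samp by blast
  also have "\<dots> \<le> (\<integral>\<^sup>+ \<zeta>. ennreal c * (\<Sum>i<5. V (W i) \<zeta>) \<partial>\<mu>)"
    by (rule nn_integral_mono_AE) (use AE pt in auto)
  also have "\<dots> = ennreal c * (\<Sum>i<5. integral\<^sup>N \<mu> (V (W i)))"
    using meas by (simp add: nn_integral_cmult nn_integral_sum)
  also have "\<dots> \<le> ennreal c * (\<Sum>i<(5::nat). ennreal (B * N))"
    using samp by (intro mult_left_mono sum_mono) auto
  also have "\<dots> = ennreal c * (5 * ennreal (B * N))" by simp
  also have "\<dots> = ennreal (c * (5 * (B * N)))"
    using c_nn B_pos Npos by (simp add: ennreal_mult)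
  finally have fin: "ennreal (A * N) \<le> ennreal (c * (5 * (B * N)))" .
  have "A * N \<le> c * (5 * (B * N))"
    using fin c_nn B_pos Npos ennreal_le_iff by (metis mult_nonneg_nonneg less_imp_le zero_le_numeral)
  then have "A * N \<le> (c * (5 * B)) * N" by (simp only: mult.assoc)
  then have A1: "A \<le> c * (5 * B)" using Npos by (rule mult_right_le_imp_le)
  define x where "x = pi * R^2 / 2"
  have cx: "c = 4^n * exp (- x)" by (simp add: c_def x_def)
  have ee: "exp (- x) * exp x = 1" by (simp add: exp_add[symmetric])
  have "A * exp x \<le> (c * (5 * B)) * exp x" using A1 by (intro mult_right_mono) auto
  also have "\<dots> = 4^n * 5 * B * (exp (- x) * exp x)" unfolding cx by (simp only: mult_ac)
  also have "\<dots> = 4^n * 5 * B" by (simp only: ee mult_1_right)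
  finally have "A * exp x \<le> 4^n * 5 * B" .
  then have "exp x \<le> 4^n * 5 * B / A" using A_pos by (simp add: pos_le_divide_eq mult.commute)
  then have "exp x \<le> 4^n * 5 * (B / A)" by simp
  moreover have "0 < 4^n * 5 * (B / A)" using A_pos B_pos by simp
  ultimately have "x \<le> ln (4^n * 5 * (B / A))" by (simp add: ln_ge_iff)
  then show ?thesis by (simp add: x_def field_simps)
qed

end
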